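(* Let $\Gamma$ be a graph of order $n$, minimum degree $\delta$ and maximum degree $\Delta$. (1) For every $k\in\{2-\Delta,\dots,\Delta\}$, $n-\alpha_{\lfloor\frac{\Delta-k}{2}\rfloor}(\Gamma)\le\gamma_k^o(\Gamma)$. (2) For every $k\in\{1,\dots,\delta\}$, $\gamma_k^o(\Gamma)\le n-\alpha_{\lfloor\frac{\delta-k}{2}\rfloor}(\Gamma)$. (3) If $\Gamma$ is $\delta$-regular with $\delta>0$, then for every $k\in\{1,\dots,\delta\}$, $\gamma_k^o(\Gamma)=n-\alpha_{\lfloor\frac{\delta-k}{2}\rfloor}(\Gamma)$.
   Context: Graphs are finite and simple. For $S\subseteq V$ and $v\in V$, $\delta_S(v)$ is the number of neighbours of $v$ in $S$, $\overline{S}=V\setminus S$, and $\partial(S)$ is the set of vertices of $\overline{S}$ with a neighbour in $S$. For an integer $k$, a nonempty $S\subseteq V$ is an offensive $k$-alliance if $\delta_S(v)\ge\delta_{\overline{S}}(v)+k$ for all $v\in\partial(S)$, and a global offensive $k$-alliance if moreover it is dominating. $\gamma_k^o(\Gamma)$ is the minimum cardinality of a global offensive $k$-alliance. A set $S$ is $r$-dependent if $\delta_S(v)\le r$ for all $v\in S$; $\alpha_r(\Gamma)$ is the maximum cardinality of an $r$-dependent set in $\Gamma$. *)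

theory Defs
  imports Main
begin

definition simple_graph :: "'a set \<Rightarrow> ('a \<Rightarrow> 'a \<Rightarrow> bool) \<Rightarrow> bool" where
  "simple_graph V E \<longleftrightarrow> finite V \<and> (\<forall>u v. E u v \<longrightarrow> u \<in> V \<and> v \<in> V)
     \<and> (\<forall>u v. E u v \<longrightarrow> E v u) \<and> (\<forall>v. \<not> E v v)"

definition degree :: "'a set \<Rightarrow> ('a \<Rightarrow> 'a \<Rightarrow> bool) \<Rightarrow> 'a \<Rightarrow> nat" where
  "degree V E v = card {u \<in> V. E v u}"

definition max_degree :: "'a set \<Rightarrow> ('a \<Rightarrow> 'a \<Rightarrow> bool) \<Rightarrow> nat" where
  "max_degree V E = Max (degree V E ` V)"

definition min_degree :: "'a set \<Rightarrow> ('a \<Rightarrow> 'a \<Rightarrow> bool) \<Rightarrow> nat" where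
  "min_degree V E = Min (degree V E ` V)"

definition regular :: "'a set \<Rightarrow> ('a \<Rightarrow> 'a \<Rightarrow> bool) \<Rightarrow> nat \<Rightarrow> bool" where
  "regular V E d \<longleftrightarrow> (\<forall>v\<in>V. degree V E v = d)"

definition nbrs_in :: "('a \<Rightarrow> 'a \<Rightarrow> bool) \<Rightarrow> 'a set \<Rightarrow> 'a \<Rightarrow> int" where
  "nbrs_in E S v = int (card {u \<in> S. E v u})"

definition boundary :: "'a set \<Rightarrow> ('a \<Rightarrow> 'a \<Rightarrow> bool) \<Rightarrow> 'a set \<Rightarrow> 'a set" where
  "boundary V E S = {v \<in> V - S. \<exists>u\<in>S. E v u}"

definition offensive_alliance :: "'a set \<Rightarrow> ('a \<Rightarrow> 'a \<Rightarrow> bool) \<Rightarrow> int \<Rightarrow> 'a set \<Rightarrow> bool" where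
  "offensive_alliance V E k S \<longleftrightarrow> S \<subseteq> V \<and> S \<noteq> {} \<and>
     (\<forall>v\<in>boundary V E S. nbrs_in E S v \<ge> nbrs_in E (V - S) v + k)"

definition dominating :: "'a set \<Rightarrow> ('a \<Rightarrow> 'a \<Rightarrow> bool) \<Rightarrow> 'a set \<Rightarrow> bool" where
  "dominating V E S \<longleftrightarrow> S \<subseteq> V \<and> (\<forall>v\<in>V - S. \<exists>u\<in>S. E v u)"

definition global_offensive_alliance :: "'a set \<Rightarrow> ('a \<Rightarrow> 'a \<Rightarrow> bool) \<Rightarrow> int \<Rightarrow> 'a set \<Rightarrow> bool" where
  "global_offensive_alliance V E k S \<longleftrightarrow> offensive_alliance V E k S \<and> dominating V E S"

definition gamma_o :: "'a set \<Rightarrow> ('a \<Rightarrow> 'a \<Rightarrow> bool) \<Rightarrow> int \<Rightarrow> nat" where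
  "gamma_o V E k = Min (card ` {S. global_offensive_alliance V E k S})"

definition r_dependent :: "'a set \<Rightarrow> ('a \<Rightarrow> 'a \<Rightarrow> bool) \<Rightarrow> int \<Rightarrow> 'a set \<Rightarrow> bool" where
  "r_dependent V E r S \<longleftrightarrow> S \<subseteq> V \<and> (\<forall>v\<in>S. nbrs_in E S v \<le> r)"

definition alpha_dep :: "'a set \<Rightarrow> ('a \<Rightarrow> 'a \<Rightarrow> bool) \<Rightarrow> int \<Rightarrow> nat" where
  "alpha_dep V E r = Max (card ` {S. r_dependent V E r S})"

end

theory Submission
  imports Defs
begin

lemma deg_split:
  assumes "simple_graph V E" "S \<subseteq> V" "v \<in> V"
  shows "nbrs_in E S v + nbrs_in E (V - S) v = int (degree V E v)"
proof -
  have fin: "finite V" using assms(1) by (simp add: simple_graph_def)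
  have "{u \<in> V. E v u} = {u \<in> S. E v u} \<union> {u \<in> V - S. E v u}" using assms(2) by auto
  moreover have "card ({u \<in> S. E v u} \<union> {u \<in> V - S. E v u}) = card {u \<in> S. E v u} + card {u \<in> V - S. E v u}"
    by (rule card_Un_disjoint) (use fin assms(2) in \<open>auto intro: finite_subset\<close>)
  ultimately show ?thesis by (simp add: nbrs_in_def degree_def)
qed

lemma deg_le_max: "simple_graph V E \<Longrightarrow> v \<in> V \<Longrightarrow> degree V E v \<le> max_degree V E"
  unfolding max_degree_def simple_graph_def by (rule Max_ge) auto

lemma deg_ge_min: "simple_graph V E \<Longrightarrow> v \<in> V \<Longrightarrow> min_degree V E \<le> degree V E v"
  unfolding min_degree_def simple_graph_def by (rule Min_le) auto

lemma goa_fin: "finite V \<Longrightarrow> finite {S. global_offensive_alliance V E k S}"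
  by (rule finite_subset[of _ "Pow V"]) (auto simp: global_offensive_alliance_def offensive_alliance_def)

lemma rdep_fin: "finite V \<Longrightarrow> finite {S. r_dependent V E r S}"
  by (rule finite_subset[of _ "Pow V"]) (auto simp: r_dependent_def)

lemma gamma_le: "finite V \<Longrightarrow> global_offensive_alliance V E k S \<Longrightarrow> gamma_o V E k \<le> card S"
  unfolding gamma_o_def by (rule Min_le) (auto simp: goa_fin)

lemma gamma_ex: assumes "finite V" "V \<noteq> {}"
  shows "\<exists>S. global_offensive_alliance V E k S \<and> gamma_o V E k = card S"
proof -
  have "global_offensive_alliance V E k V"
    using assms by (auto simp: global_offensive_alliance_def offensive_alliance_def dominating_def boundary_def)
  hence "gamma_o V E k \<in> card ` {S. global_offensive_alliance V E k S}"
    unfolding gamma_o_def by (intro Min_in) (auto simp: goa_fin assms)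
  thus ?thesis by auto
qed

lemma alpha_ge: "finite V \<Longrightarrow> r_dependent V E r S \<Longrightarrow> card S \<le> alpha_dep V E r"
  unfolding alpha_dep_def by (rule Max_ge) (auto simp: rdep_fin)

lemma alpha_ex: assumes "finite V"
  shows "\<exists>S. r_dependent V E r S \<and> alpha_dep V E r = card S"
proof -
  have "r_dependent V E r {}" by (auto simp: r_dependent_def)
  hence "alpha_dep V E r \<in> card ` {S. r_dependent V E r S}"
    unfolding alpha_dep_def by (intro Max_in) (auto simp: rdep_fin assms)
  thus ?thesis by auto
qed

lemma part1:
  assumes g: "simple_graph V E" and ne: "V \<noteq> {}"
  shows "int (card V) - int (alpha_dep V E ((int (max_degree V E) - k) div 2)) \<le> int (gamma_o V E k)"
proof -
  have fin: "finite V" using g by (simp add: simple_graph_def)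
  obtain S where S: "global_offensive_alliance V E k S" "gamma_o V E k = card S"
    using gamma_ex[OF fin ne] by blast
  have SV: "S \<subseteq> V" using S by (simp add: global_offensive_alliance_def offensive_alliance_def)
  have "r_dependent V E ((int (max_degree V E) - k) div 2) (V - S)"
    unfolding r_dependent_def
  proof safe
    fix v assume v: "v \<in> V" "v \<notin> S"
    then obtain u where "u \<in> S" "E v u" using S by (auto simp: global_offensive_alliance_def dominating_def)
    hence "v \<in> boundary V E S" using v by (auto simp: boundary_def)
    hence a: "nbrs_in E S v \<ge> nbrs_in E (V - S) v + k"
      using S by (auto simp: global_offensive_alliance_def offensive_alliance_def)
    have b: "nbrs_in E S v + nbrs_in E (V - S) v = int (degree V E v)" by (rule deg_split[OF g SV v(1)])
    have c: "int (degree V E v) \<le> int (max_degree V E)" using deg_le_max[OF g v(1)] by simp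
    from a b c show "nbrs_in E (V - S) v \<le> (int (max_degree V E) - k) div 2" by presburger
  qed
  hence "card (V - S) \<le> alpha_dep V E ((int (max_degree V E) - k) div 2)" by (rule alpha_ge[OF fin])
  moreover have "card (V - S) + card S = card V"
    using SV fin by (metis card_Diff_subset card_mono finite_subset le_add_diff_inverse2)
  ultimately show ?thesis using S(2) by linarith
qed

lemma part2:
  assumes g: "simple_graph V E" and ne: "V \<noteq> {}" and k: "1 \<le> k" "k \<le> int (min_degree V E)"
  shows "int (gamma_o V E k) \<le> int (card V) - int (alpha_dep V E ((int (min_degree V E) - k) div 2))"
proof -
  define r where "r = (int (min_degree V E) - k) div 2"
  have fin: "finite V" using g by (simp add: simple_graph_def)
  obtain D where D: "r_dependent V E r D" "alpha_dep V E r = card D"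
    using alpha_ex[OF fin] by blast
  have DV: "D \<subseteq> V" using D by (simp add: r_dependent_def)
  define S where "S = V - D"
  have SV: "S \<subseteq> V" and VS: "V - S = D" using DV by (auto simp: S_def)
  have key: "nbrs_in E S v \<ge> nbrs_in E D v + k" if v: "v \<in> D" for v
  proof -
    have vV: "v \<in> V" using v DV by auto
    have a: "nbrs_in E D v \<le> r" using D v by (simp add: r_dependent_def)
    have b: "nbrs_in E S v + nbrs_in E D v = int (degree V E v)" using deg_split[OF g SV vV] VS by simp
    have c: "int (degree V E v) \<ge> int (min_degree V E)" using deg_ge_min[OF g vV] by simp
    from a b c show ?thesis unfolding r_def by presburger
  qed
  have "S \<noteq> {}"
  proof
    assume "S = {}"
    hence DV': "D = V" using DV by (auto simp: S_def)
    obtain v where v: "v \<in> V" using ne by auto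
    have "nbrs_in E S v \<ge> nbrs_in E D v + k" using key v DV' by auto
    moreover have "nbrs_in E S v = 0" using \<open>S = {}\<close> by (simp add: nbrs_in_def)
    moreover have "nbrs_in E D v \<ge> 0" by (simp add: nbrs_in_def)
    ultimately show False using k by linarith
  qed
  have "global_offensive_alliance V E k S"
    unfolding global_offensive_alliance_def offensive_alliance_def dominating_def
  proof (intro conjI ballI)
    show "S \<subseteq> V" "S \<noteq> {}" "S \<subseteq> V" by fact+
  next
    fix v assume "v \<in> boundary V E S"
    hence "v \<in> D" using VS by (auto simp: boundary_def)
    thus "nbrs_in E (V - S) v + k \<le> nbrs_in E S v" using key VS by auto
  next
    fix v assume "v \<in> V - S"
    hence "v \<in> D" using VS by auto
    hence "nbrs_in E S v \<ge> nbrs_in E D v + k" by (rule key)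
    moreover have "nbrs_in E D v \<ge> 0" by (simp add: nbrs_in_def)
    ultimately have "card {u \<in> S. E v u} > 0" using k by (simp add: nbrs_in_def)
    hence "{u \<in> S. E v u} \<noteq> {}" by (metis card.empty less_irrefl)
    thus "\<exists>u\<in>S. E v u" by auto
  qed
  hence "gamma_o V E k \<le> card S" by (rule gamma_le[OF fin])
  moreover have "card S + card D = card V"
    using DV fin unfolding S_def by (metis card_Diff_subset card_mono finite_subset le_add_diff_inverse2)
  ultimately show ?thesis using D(2) unfolding r_def by linarith
qed

theorem mainTheorem3:
  fixes V :: "'a set" and E :: "'a \<Rightarrow> 'a \<Rightarrow> bool"
  assumes "simple_graph V E" and "V \<noteq> {}"
  defines "n \<equiv> int (card V)"
    and "\<Delta> \<equiv> int (max_degree V E)"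
    and "\<delta> \<equiv> int (min_degree V E)"
  shows "(\<forall>k::int. 2 - \<Delta> \<le> k \<and> k \<le> \<Delta> \<longrightarrow>
            n - int (alpha_dep V E ((\<Delta> - k) div 2)) \<le> int (gamma_o V E k))
       \<and> (\<forall>k::int. 1 \<le> k \<and> k \<le> \<delta> \<longrightarrow>
            int (gamma_o V E k) \<le> n - int (alpha_dep V E ((\<delta> - k) div 2)))
       \<and> (regular V E (min_degree V E) \<and> \<delta> > 0 \<longrightarrow>
            (\<forall>k::int. 1 \<le> k \<and> k \<le> \<delta> \<longrightarrow>
              int (gamma_o V E k) = n - int (alpha_dep V E ((\<delta> - k) div 2))))"
proof (intro conjI allI impI)
  fix k :: int
  show "n - int (alpha_dep V E ((\<Delta> - k) div 2)) \<le> int (gamma_o V E k)"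
    unfolding n_def \<Delta>_def by (rule part1[OF assms(1,2)])
next
  fix k :: int assume "1 \<le> k \<and> k \<le> \<delta>"
  thus "int (gamma_o V E k) \<le> n - int (alpha_dep V E ((\<delta> - k) div 2))"
    unfolding n_def \<delta>_def using part2[OF assms(1,2)] by blast
next
  fix k :: int assume r: "regular V E (min_degree V E) \<and> \<delta> > 0" and k: "1 \<le> k \<and> k \<le> \<delta>"
  have "degree V E ` V = {min_degree V E}" using r assms(2) by (auto simp: regular_def)
  hence "max_degree V E = min_degree V E" by (simp add: max_degree_def)
  hence "\<Delta> = \<delta>" by (simp add: \<Delta>_def \<delta>_def)
  have "n - int (alpha_dep V E ((\<Delta> - k) div 2)) \<le> int (gamma_o V E k)"
    unfolding n_def \<Delta>_def by (rule part1[OF assms(1,2)])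
  moreover have "int (gamma_o V E k) \<le> n - int (alpha_dep V E ((\<delta> - k) div 2))"
    unfolding n_def \<delta>_def using part2[OF assms(1,2)] k by (simp add: \<delta>_def)
  ultimately show "int (gamma_o V E k) = n - int (alpha_dep V E ((\<delta> - k) div 2))"
    using \<open>\<Delta> = \<delta>\<close> by simp
qed

end
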